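(* Let $\mathcal{X}$ be a finite set, $\pi$ a probability mass function on $\mathcal{X}$ with full support, and let a group $\mathcal{G}$ act on $\mathcal{X}$ with orbits $(\mathcal{O}_i)_{i=1}^k$ and Gibbs, Metropolis–Hastings and Barker orbit kernels $G$, $M$, $B$. Let $\mathbf{G}=\{Q\in\mathcal{S}(\pi):GQG=Q\}$. For every $P\in\mathcal{S}(\pi)$ and $Q\in\mathbf{G}$, $$D^\pi_{KL}(P\|Q)=D^\pi_{KL}(P\|GPG)+D^\pi_{KL}(GPG\|Q).$$ In particular $GPG$ is the unique projection of $P$ onto $\mathbf{G}$ under KL divergence: $D^\pi_{KL}(P\|GPG)=\min_{Q\in\mathbf{G}}D^\pi_{KL}(P\|Q)$. Moreover, for all $Q\in\mathbf{G}$, $D^\pi_{KL}(MPM\|Q)=D^\pi_{KL}(MPM\|GPG)+D^\pi_{KL}(GPG\|Q)$ and $D^\pi_{KL}(BPB\|Q)=D^\pi_{KL}(BPB\|GPG)+D^\pi_{KL}(GPG\|Q)$, so $GPG$ is also the unique KL projection of $MPM$ and of $BPB$ onto $\mathbf{G}$. Taking $Q=\Pi$: $D^\pi_{KL}(P\|\Pi)\ge D^\pi_{KL}(GPG\|\Pi)$, $D^\pi_{KL}(MPM\|\Pi)\ge D^\pi_{KL}(GPG\|\Pi)$ and $D^\pi_{KL}(BPB\|\Pi)\ge D^\pi_{KL}(GPG\|\Pi)$.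
   Context: $\mathcal{S}(\pi)$ is the set of transition matrices $P$ with $\pi P=\pi$; $\Pi$ is the matrix all of whose rows equal $\pi$. For transition matrices $P,Q$, $D^\pi_{KL}(P\|Q)=\sum_{x,y}\pi(x)P(x,y)\log\frac{P(x,y)}{Q(x,y)}$ with convention $0\log(0/a)=0$. With $\mathcal{O}(x)$ the orbit of $x$: $G(x,y)=\pi(y)/\pi(\mathcal{O}(x))$ for $y\in\mathcal{O}(x)$, else $0$; $M(x,y)=\frac{1}{|\mathcal{O}(x)|-1}\min\{1,\pi(y)/\pi(x)\}$ for $y\in\mathcal{O}(x)\setminus\{x\}$, $0$ off the orbit, $M(x,x)=1-\sum_{y\ne x}M(x,y)$; $B$ is the same with acceptance $\pi(y)/(\pi(x)+\pi(y))$. *)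

theory Defs
  imports "HOL-Analysis.Analysis" "HOL-Algebra.Group_Action"
begin

definition stochastic :: "('x::finite \<Rightarrow> 'x \<Rightarrow> real) \<Rightarrow> bool" where
  "stochastic P \<longleftrightarrow> (\<forall>x y. 0 \<le> P x y) \<and> (\<forall>x. (\<Sum>y\<in>UNIV. P x y) = 1)"

definition stat_set :: "('x::finite \<Rightarrow> real) \<Rightarrow> ('x \<Rightarrow> 'x \<Rightarrow> real) set" where
  "stat_set \<pi> = {P. stochastic P \<and> (\<forall>y. (\<Sum>x\<in>UNIV. \<pi> x * P x y) = \<pi> y)}"

definition mmul :: "('x::finite \<Rightarrow> 'x \<Rightarrow> real) \<Rightarrow> ('x \<Rightarrow> 'x \<Rightarrow> real) \<Rightarrow> 'x \<Rightarrow> 'x \<Rightarrow> real" where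
  "mmul P Q x y = (\<Sum>z\<in>UNIV. P x z * Q z y)"

definition Pi_mat :: "('x \<Rightarrow> real) \<Rightarrow> 'x \<Rightarrow> 'x \<Rightarrow> real" where
  "Pi_mat \<pi> x y = \<pi> y"

definition KL :: "('x::finite \<Rightarrow> real) \<Rightarrow> ('x \<Rightarrow> 'x \<Rightarrow> real) \<Rightarrow> ('x \<Rightarrow> 'x \<Rightarrow> real) \<Rightarrow> ereal" where
  "KL \<pi> P Q =
     (if \<exists>x y. \<pi> x * P x y > 0 \<and> Q x y = 0 then \<infinity>
      else ereal (\<Sum>x\<in>UNIV. \<Sum>y\<in>UNIV.
              (if \<pi> x * P x y = 0 then 0 else \<pi> x * P x y * ln (P x y / Q x y))))"

(* Orbit kernels; orb x is the orbit of x *)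
definition gibbs_kernel :: "('x \<Rightarrow> real) \<Rightarrow> ('x \<Rightarrow> 'x set) \<Rightarrow> 'x \<Rightarrow> 'x \<Rightarrow> real" where
  "gibbs_kernel \<pi> orb x y = (if y \<in> orb x then \<pi> y / sum \<pi> (orb x) else 0)"

definition mh_kernel :: "('x \<Rightarrow> real) \<Rightarrow> ('x \<Rightarrow> 'x set) \<Rightarrow> 'x \<Rightarrow> 'x \<Rightarrow> real" where
  "mh_kernel \<pi> orb x y =
     (if y = x then 1 - (\<Sum>z\<in>orb x - {x}. (1 / (real (card (orb x)) - 1)) * min 1 (\<pi> z / \<pi> x))
      else if y \<in> orb x then (1 / (real (card (orb x)) - 1)) * min 1 (\<pi> y / \<pi> x)
      else 0)"

definition barker_kernel :: "('x \<Rightarrow> real) \<Rightarrow> ('x \<Rightarrow> 'x set) \<Rightarrow> 'x \<Rightarrow> 'x \<Rightarrow> real" where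
  "barker_kernel \<pi> orb x y =
     (if y = x then 1 - (\<Sum>z\<in>orb x - {x}. (1 / (real (card (orb x)) - 1)) * (\<pi> z / (\<pi> x + \<pi> z)))
      else if y \<in> orb x then (1 / (real (card (orb x)) - 1)) * (\<pi> y / (\<pi> x + \<pi> y))
      else 0)"

definition fixed_set :: "('x::finite \<Rightarrow> real) \<Rightarrow> ('x \<Rightarrow> 'x \<Rightarrow> real) \<Rightarrow> ('x \<Rightarrow> 'x \<Rightarrow> real) set" where
  "fixed_set \<pi> K = {Q \<in> stat_set \<pi>. mmul (mmul K Q) K = Q}"

end

theory Submission
  imports Defs
begin


lemma orbit_facts:
  assumes "group_action Grp UNIV \<phi>"
  shows "x \<in> orbit Grp \<phi> x" "y \<in> orbit Grp \<phi> x \<longleftrightarrow> orbit Grp \<phi> y = orbit Grp \<phi> x"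
proof -
  interpret group_action Grp UNIV \<phi> by (rule assms)
  show "x \<in> orbit Grp \<phi> x" by (rule orbit_refl) simp
  show "y \<in> orbit Grp \<phi> x \<longleftrightarrow> orbit Grp \<phi> y = orbit Grp \<phi> x"
  proof
    assume h: "y \<in> orbit Grp \<phi> x"
    show "orbit Grp \<phi> y = orbit Grp \<phi> x"
    proof
      show "orbit Grp \<phi> y \<subseteq> orbit Grp \<phi> x" using h orbit_trans by blast
      have "x \<in> orbit Grp \<phi> y" using h orbit_sym by blast
      then show "orbit Grp \<phi> x \<subseteq> orbit Grp \<phi> y" using orbit_trans by blast
    qed
  next
    assume "orbit Grp \<phi> y = orbit Grp \<phi> x"
    then show "y \<in> orbit Grp \<phi> x" using orbit_refl by blast
  qed
qed

lemma mmul_assoc: "mmul (mmul A B) C = mmul A (mmul B C)"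
proof (intro ext)
  fix x y
  have "mmul (mmul A B) C x y = (\<Sum>w\<in>UNIV. \<Sum>z\<in>UNIV. A x z * B z w * C w y)"
    unfolding mmul_def by (simp add: sum_distrib_right)
  also have "\<dots> = (\<Sum>z\<in>UNIV. \<Sum>w\<in>UNIV. A x z * B z w * C w y)" by (rule sum.swap)
  also have "\<dots> = mmul A (mmul B C) x y"
    unfolding mmul_def by (simp add: sum_distrib_left mult.assoc)
  finally show "mmul (mmul A B) C x y = mmul A (mmul B C) x y" .
qed

lemma stoch_mmul: assumes "stochastic A" "stochastic B" shows "stochastic (mmul A B)"
proof -
  have An: "\<And>x y. 0 \<le> A x y" and As: "\<And>x. (\<Sum>y\<in>UNIV. A x y) = 1"
    using assms unfolding stochastic_def by auto
  have Bn: "\<And>x y. 0 \<le> B x y" and Bs: "\<And>x. (\<Sum>y\<in>UNIV. B x y) = 1"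
    using assms unfolding stochastic_def by auto
  have "(\<Sum>y\<in>UNIV. mmul A B x y) = 1" for x
  proof -
    have "(\<Sum>y\<in>UNIV. mmul A B x y) = (\<Sum>y\<in>UNIV. \<Sum>z\<in>UNIV. A x z * B z y)" unfolding mmul_def by simp
    also have "\<dots> = (\<Sum>z\<in>UNIV. \<Sum>y\<in>UNIV. A x z * B z y)" by (rule sum.swap)
    also have "\<dots> = (\<Sum>z\<in>UNIV. A x z)" by (simp add: sum_distrib_left[symmetric] Bs)
    finally show ?thesis using As by simp
  qed
  moreover have "0 \<le> mmul A B x y" for x y unfolding mmul_def by (intro sum_nonneg mult_nonneg_nonneg An Bn)
  ultimately show ?thesis unfolding stochastic_def by auto
qed

lemma stat_mmul: assumes "A \<in> stat_set \<pi>" "B \<in> stat_set \<pi>" shows "mmul A B \<in> stat_set \<pi>"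
proof -
  have sA: "\<And>y. (\<Sum>x\<in>UNIV. \<pi> x * A x y) = \<pi> y" and sB: "\<And>y. (\<Sum>x\<in>UNIV. \<pi> x * B x y) = \<pi> y"
    using assms unfolding stat_set_def by auto
  have "(\<Sum>x\<in>UNIV. \<pi> x * mmul A B x y) = \<pi> y" for y
  proof -
    have "(\<Sum>x\<in>UNIV. \<pi> x * mmul A B x y) = (\<Sum>x\<in>UNIV. \<Sum>z\<in>UNIV. \<pi> x * A x z * B z y)"
      unfolding mmul_def by (simp add: sum_distrib_left mult.assoc)
    also have "\<dots> = (\<Sum>z\<in>UNIV. \<Sum>x\<in>UNIV. \<pi> x * A x z * B z y)" by (rule sum.swap)
    also have "\<dots> = (\<Sum>z\<in>UNIV. \<pi> z * B z y)" by (simp add: sum_distrib_right[symmetric] sA)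
    finally show ?thesis using sB by simp
  qed
  then show ?thesis using assms stoch_mmul unfolding stat_set_def by auto
qed

definition klsum :: "('x::finite \<Rightarrow> real) \<Rightarrow> ('x \<Rightarrow> 'x \<Rightarrow> real) \<Rightarrow> ('x \<Rightarrow> 'x \<Rightarrow> real) \<Rightarrow> real" where
  "klsum \<pi> R Q = (\<Sum>x\<in>UNIV. \<Sum>y\<in>UNIV. \<pi> x * R x y * ln (R x y / Q x y))"

lemma KL_alt: "KL \<pi> R Q = (if \<exists>x y. \<pi> x * R x y > 0 \<and> Q x y = 0 then \<infinity> else ereal (klsum \<pi> R Q))"
proof -
  have "(if \<pi> x * R x y = 0 then 0 else \<pi> x * R x y * ln (R x y / Q x y)) = \<pi> x * R x y * ln (R x y / Q x y)" for x y
    by simp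
  then show ?thesis unfolding KL_def klsum_def by presburger
qed

lemma gibbs:
  assumes R: "stochastic R" and Q: "stochastic Q" and pos: "\<forall>x. \<pi> x > 0"
  shows "KL \<pi> R Q \<ge> 0 \<and> (KL \<pi> R Q = 0 \<longrightarrow> R = Q)"
proof (cases "\<exists>x y. \<pi> x * R x y > 0 \<and> Q x y = 0")
  case True
  then show ?thesis by (simp add: KL_alt)
next
  case False
  have Rn: "\<And>x y. 0 \<le> R x y" and Rs: "\<And>x. (\<Sum>y\<in>UNIV. R x y) = 1"
    using R unfolding stochastic_def by auto
  have Qn: "\<And>x y. 0 \<le> Q x y" and Qs: "\<And>x. (\<Sum>y\<in>UNIV. Q x y) = 1"
    using Q unfolding stochastic_def by auto
  define t where "t x y = \<pi> x * R x y * ln (R x y / Q x y) - (\<pi> x * R x y - \<pi> x * Q x y)" for x y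
  have Qp: "Q x y > 0" if "R x y > 0" for x y
  proof -
    have "\<pi> x * R x y > 0" using pos that by simp
    then have "Q x y \<noteq> 0" using False by blast
    then show ?thesis using Qn[of x y] by simp
  qed
  have key: "R x y * ln (R x y / Q x y) \<ge> R x y - Q x y" if "R x y > 0" for x y
  proof -
    have q: "Q x y > 0" using Qp that .
    have "ln (Q x y / R x y) \<le> Q x y / R x y - 1" using ln_le_minus_one q that by simp
    moreover have "ln (R x y / Q x y) = - ln (Q x y / R x y)" using q that by (simp add: ln_div)
    ultimately have "ln (R x y / Q x y) \<ge> 1 - Q x y / R x y" by simp
    then have "R x y * ln (R x y / Q x y) \<ge> R x y * (1 - Q x y / R x y)"
      using that by (simp add: mult_left_mono)
    also have "R x y * (1 - Q x y / R x y) = R x y - Q x y" using that by (simp add: field_simps)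
    finally show ?thesis by simp
  qed
  have tnn: "t x y \<ge> 0" for x y
  proof (cases "R x y = 0")
    case True then show ?thesis using Qn pos by (simp add: t_def less_imp_le)
  next
    case False
    then have "R x y > 0" using Rn[of x y] by simp
    from key[OF this] have "\<pi> x * (R x y * ln (R x y / Q x y)) \<ge> \<pi> x * (R x y - Q x y)"
      using pos by (simp add: less_imp_le mult_left_mono)
    then show ?thesis by (simp add: t_def algebra_simps)
  qed
  have diff0: "(\<Sum>x\<in>UNIV. \<Sum>y\<in>UNIV. \<pi> x * R x y - \<pi> x * Q x y) = 0"
    by (simp add: sum_subtractf sum_distrib_left[symmetric] Rs Qs)
  have ks: "klsum \<pi> R Q = (\<Sum>x\<in>UNIV. \<Sum>y\<in>UNIV. t x y)"
  proof -
    have "(\<Sum>x\<in>UNIV. \<Sum>y\<in>UNIV. t x y) = klsum \<pi> R Q - (\<Sum>x\<in>UNIV. \<Sum>y\<in>UNIV. \<pi> x * R x y - \<pi> x * Q x y)"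
      unfolding t_def klsum_def by (simp add: sum_subtractf)
    then show ?thesis using diff0 by simp
  qed
  have nn: "klsum \<pi> R Q \<ge> 0" unfolding ks by (intro sum_nonneg tnn)
  have eq: "R = Q" if "klsum \<pi> R Q = 0"
  proof (intro ext)
    fix x y
    have "\<forall>x\<in>UNIV. (\<Sum>y\<in>UNIV. t x y) = 0"
      using that unfolding ks by (subst sum_nonneg_eq_0_iff[symmetric]) (auto intro: sum_nonneg tnn)
    then have "(\<Sum>y\<in>UNIV. t x y) = 0" by simp
    then have t0: "t x y = 0" using tnn by (simp add: sum_nonneg_eq_0_iff)
    show "R x y = Q x y"
    proof (cases "R x y = 0")
      case True
      then have "\<pi> x * Q x y = 0" using t0 by (simp add: t_def)
      then show ?thesis using True pos by (metis less_irrefl mult_eq_0_iff)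
    next
      case False
      then have r: "R x y > 0" using Rn[of x y] by simp
      have q: "Q x y > 0" using Qp r .
      have "\<pi> x * (R x y * ln (R x y / Q x y)) = \<pi> x * (R x y - Q x y)" using t0 by (simp add: t_def algebra_simps)
      then have "R x y * ln (R x y / Q x y) = R x y - Q x y" using pos by (metis less_irrefl mult_cancel_left)
      then have "ln (R x y / Q x y) = 1 - Q x y / R x y" using r by (simp add: field_simps)
      moreover have "ln (R x y / Q x y) = - ln (Q x y / R x y)" using q r by (simp add: ln_div)
      ultimately have "ln (Q x y / R x y) = Q x y / R x y - 1" by simp
      then have "Q x y / R x y = 1" using ln_eq_minus_one[of "Q x y / R x y"] q r by simp
      then show ?thesis using r by (simp add: divide_eq_1_iff)
    qed
  qed
  show ?thesis using False nn eq by (auto simp: KL_alt)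
qed



locale orbs =
  fixes \<pi> :: "'x::finite \<Rightarrow> real" and orb :: "'x \<Rightarrow> 'x set"
  assumes pos: "\<And>x. \<pi> x > 0" and pmf: "(\<Sum>x\<in>UNIV. \<pi> x) = 1"
    and orefl: "\<And>x. x \<in> orb x" and osym: "\<And>x y. y \<in> orb x \<longleftrightarrow> orb y = orb x"
begin

abbreviation "Gk \<equiv> gibbs_kernel \<pi> orb"

definition okern :: "('x \<Rightarrow> 'x \<Rightarrow> real) \<Rightarrow> bool" where
  "okern K \<longleftrightarrow> stochastic K \<and> (\<forall>x y. K x y \<noteq> 0 \<longrightarrow> y \<in> orb x) \<and> (\<forall>x y. \<pi> x * K x y = \<pi> y * K y x)"

lemma spos: "sum \<pi> (orb x) > 0"
  using orefl[of x] pos by (intro sum_pos) auto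

lemma sum_if: "(\<Sum>y\<in>UNIV. if y \<in> A then g y else 0) = sum g (A::'x set)"
  by (simp add: sum.If_cases)

lemma G_okern: "okern Gk"
proof -
  have nn: "0 \<le> Gk x y" for x y
    using pos[of y] spos[of x] by (simp add: gibbs_kernel_def less_imp_le)
  have rs: "(\<Sum>y\<in>UNIV. Gk x y) = 1" for x
  proof -
    have "(\<Sum>y\<in>UNIV. Gk x y) = (\<Sum>y\<in>orb x. \<pi> y / sum \<pi> (orb x))"
      unfolding gibbs_kernel_def by (rule sum_if)
    also have "\<dots> = 1" using spos[of x] by (simp add: sum_divide_distrib[symmetric])
    finally show ?thesis .
  qed
  have rev: "\<pi> x * Gk x y = \<pi> y * Gk y x" for x y
  proof (cases "y \<in> orb x")
    case True
    then have "x \<in> orb y" "orb y = orb x" using osym orefl by metis+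
    then show ?thesis using True by (simp add: gibbs_kernel_def)
  next
    case False
    then have "x \<notin> orb y" using osym orefl by metis
    then show ?thesis using False by (simp add: gibbs_kernel_def)
  qed
  show ?thesis unfolding okern_def stochastic_def
    using nn rs rev by (auto simp: gibbs_kernel_def split: if_splits)
qed

lemma okern_stat: assumes "okern K" shows "K \<in> stat_set \<pi>"
proof -
  have s: "stochastic K" and r: "\<And>x y. \<pi> x * K x y = \<pi> y * K y x"
    using assms unfolding okern_def by auto
  have "(\<Sum>x\<in>UNIV. \<pi> x * K x y) = \<pi> y" for y
  proof -
    have "(\<Sum>x\<in>UNIV. \<pi> x * K x y) = (\<Sum>x\<in>UNIV. \<pi> y * K y x)" using r by simp
    also have "\<dots> = \<pi> y" using s unfolding stochastic_def by (simp add: sum_distrib_left[symmetric])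
    finally show ?thesis .
  qed
  then show ?thesis using s unfolding stat_set_def by auto
qed

lemma KG: assumes "okern K" shows "mmul K Gk = Gk"
proof (intro ext)
  fix x y
  have s: "stochastic K" and sp: "\<And>x y. K x y \<noteq> 0 \<Longrightarrow> y \<in> orb x"
    using assms unfolding okern_def by auto
  have "mmul K Gk x y = (\<Sum>z\<in>UNIV. K x z * Gk x y)"
    unfolding mmul_def
  proof (rule sum.cong[OF refl])
    fix z
    show "K x z * Gk z y = K x z * Gk x y"
    proof (cases "K x z = 0")
      case False
      then have "orb z = orb x" using sp osym by blast
      then show ?thesis by (simp add: gibbs_kernel_def)
    qed simp
  qed
  also have "\<dots> = Gk x y" using s unfolding stochastic_def by (simp add: sum_distrib_right[symmetric])
  finally show "mmul K Gk x y = Gk x y" .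
qed

lemma GK: assumes "okern K" shows "mmul Gk K = Gk"
proof (intro ext)
  fix x y
  have s: "stochastic K" and sp: "\<And>x y. K x y \<noteq> 0 \<Longrightarrow> y \<in> orb x"
    and r: "\<And>x y. \<pi> x * K x y = \<pi> y * K y x"
    using assms unfolding okern_def by auto
  let ?s = "sum \<pi> (orb x)"
  have "mmul Gk K x y = (\<Sum>z\<in>UNIV. if z \<in> orb x then \<pi> y / ?s * K y z else 0)"
    unfolding mmul_def
  proof (rule sum.cong[OF refl])
    fix z
    show "Gk x z * K z y = (if z \<in> orb x then \<pi> y / ?s * K y z else 0)"
      using r[of z y] by (simp add: gibbs_kernel_def field_simps)
  qed
  also have "\<dots> = \<pi> y / ?s * (\<Sum>z\<in>orb x. K y z)" by (simp add: sum_if sum_distrib_left)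
  also have "\<dots> = Gk x y"
  proof (cases "y \<in> orb x")
    case True
    then have oy: "orb y = orb x" using osym by blast
    have "(\<Sum>z\<in>orb x. K y z) = (\<Sum>z\<in>UNIV. K y z)"
      by (rule sum.mono_neutral_left) (use sp oy in auto)
    then show ?thesis using s True unfolding stochastic_def by (simp add: gibbs_kernel_def)
  next
    case False
    have "K y z = 0" if "z \<in> orb x" for z
    proof (rule ccontr)
      assume "K y z \<noteq> 0"
      then have "orb z = orb y" using sp osym by blast
      moreover have "orb z = orb x" using that osym by blast
      ultimately show False using False orefl by metis
    qed
    then show ?thesis using False by (simp add: gibbs_kernel_def)
  qed
  finally show "mmul Gk K x y = Gk x y" .
qed

lemma scale:
  assumes "orb x = orb x'" "orb y = orb y'"
  shows "mmul (mmul Gk S) Gk x' y' * \<pi> y = mmul (mmul Gk S) Gk x y * \<pi> y'"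
proof -
  have a: "mmul Gk S x' w = mmul Gk S x w" for w
    unfolding mmul_def gibbs_kernel_def assms(1) ..
  have b: "Gk w y' * \<pi> y = Gk w y * \<pi> y'" for w
  proof -
    have "y' \<in> orb w \<longleftrightarrow> y \<in> orb w" using osym assms(2) by metis
    then show ?thesis by (simp add: gibbs_kernel_def)
  qed
  show ?thesis unfolding mmul_def[of "mmul Gk S"] sum_distrib_right
    by (intro sum.cong refl) (simp add: a mult.assoc b)
qed

lemma inv_sum:
  assumes finv: "\<And>x x' y y'. orb x = orb x' \<Longrightarrow> orb y = orb y' \<Longrightarrow> f x y = f x' y'"
  shows "(\<Sum>x\<in>UNIV. \<Sum>y\<in>UNIV. \<pi> x * mmul (mmul Gk R) Gk x y * f x y)
       = (\<Sum>x\<in>UNIV. \<Sum>y\<in>UNIV. \<pi> x * R x y * f x y)"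
proof -
  have stepa: "(\<Sum>y\<in>UNIV. Gk w y * f x y) = f x w" for x w
  proof -
    have "(\<Sum>y\<in>UNIV. Gk w y * f x y) = (\<Sum>y\<in>UNIV. if y \<in> orb w then \<pi> y / sum \<pi> (orb w) * f x w else 0)"
    proof (rule sum.cong[OF refl])
      fix y show "Gk w y * f x y = (if y \<in> orb w then \<pi> y / sum \<pi> (orb w) * f x w else 0)"
      proof (cases "y \<in> orb w")
        case True
        then have "orb y = orb w" using osym by blast
        then have "f x y = f x w" using finv by blast
        then show ?thesis using True by (simp add: gibbs_kernel_def)
      qed (simp add: gibbs_kernel_def)
    qed
    also have "\<dots> = f x w * (\<Sum>y\<in>orb w. \<pi> y) / sum \<pi> (orb w)"
      by (simp add: sum_if sum_distrib_left sum_divide_distrib mult.commute)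
    also have "\<dots> = f x w" using spos[of w] by simp
    finally show ?thesis .
  qed
  have stepb: "(\<Sum>x\<in>UNIV. \<pi> x * Gk x z * f x w) = \<pi> z * f z w" for z w
  proof -
    have "(\<Sum>x\<in>UNIV. \<pi> x * Gk x z * f x w) = (\<Sum>x\<in>UNIV. if x \<in> orb z then \<pi> x * (\<pi> z / sum \<pi> (orb z) * f z w) else 0)"
    proof (rule sum.cong[OF refl])
      fix x show "\<pi> x * Gk x z * f x w = (if x \<in> orb z then \<pi> x * (\<pi> z / sum \<pi> (orb z) * f z w) else 0)"
      proof (cases "x \<in> orb z")
        case True
        then have o: "orb x = orb z" using osym by blast
        then have "f x w = f z w" using finv by blast
        then show ?thesis using True o orefl by (simp add: gibbs_kernel_def)
      next
        case False
        then have "z \<notin> orb x" using osym orefl by metis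
        then show ?thesis using False by (simp add: gibbs_kernel_def)
      qed
    qed
    also have "\<dots> = (\<Sum>x\<in>orb z. \<pi> x) * (\<pi> z / sum \<pi> (orb z) * f z w)"
      by (simp add: sum_if sum_distrib_right sum_divide_distrib)
    also have "\<dots> = \<pi> z * f z w" using spos[of z] by simp
    finally show ?thesis .
  qed
  have A: "(\<Sum>y\<in>UNIV. mmul (mmul Gk R) Gk x y * f x y) = (\<Sum>w\<in>UNIV. mmul Gk R x w * f x w)" for x
  proof -
    have "(\<Sum>y\<in>UNIV. mmul (mmul Gk R) Gk x y * f x y) = (\<Sum>y\<in>UNIV. \<Sum>w\<in>UNIV. mmul Gk R x w * (Gk w y * f x y))"
      unfolding mmul_def[of "mmul Gk R"] by (simp add: sum_distrib_right mult.assoc)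
    also have "\<dots> = (\<Sum>w\<in>UNIV. \<Sum>y\<in>UNIV. mmul Gk R x w * (Gk w y * f x y))" by (rule sum.swap)
    also have "\<dots> = (\<Sum>w\<in>UNIV. mmul Gk R x w * f x w)" by (simp add: sum_distrib_left[symmetric] stepa)
    finally show ?thesis .
  qed
  have B: "(\<Sum>x\<in>UNIV. \<pi> x * mmul Gk R x w * f x w) = (\<Sum>z\<in>UNIV. \<pi> z * R z w * f z w)" for w
  proof -
    have "(\<Sum>x\<in>UNIV. \<pi> x * mmul Gk R x w * f x w) = (\<Sum>x\<in>UNIV. \<Sum>z\<in>UNIV. R z w * (\<pi> x * Gk x z * f x w))"
      unfolding mmul_def by (simp add: sum_distrib_right sum_distrib_left mult_ac)
    also have "\<dots> = (\<Sum>z\<in>UNIV. \<Sum>x\<in>UNIV. R z w * (\<pi> x * Gk x z * f x w))" by (rule sum.swap)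
    also have "\<dots> = (\<Sum>z\<in>UNIV. \<pi> z * R z w * f z w)" by (intro sum.cong refl, subst sum_distrib_left[symmetric], subst stepb, simp add: mult_ac)
    finally show ?thesis .
  qed
  have "(\<Sum>x\<in>UNIV. \<Sum>y\<in>UNIV. \<pi> x * mmul (mmul Gk R) Gk x y * f x y)
      = (\<Sum>x\<in>UNIV. \<Sum>w\<in>UNIV. \<pi> x * mmul Gk R x w * f x w)"
  proof (rule sum.cong[OF refl])
    fix x
    have "(\<Sum>y\<in>UNIV. \<pi> x * mmul (mmul Gk R) Gk x y * f x y) = \<pi> x * (\<Sum>y\<in>UNIV. mmul (mmul Gk R) Gk x y * f x y)"
      by (simp add: sum_distrib_left mult.assoc)
    also have "\<dots> = \<pi> x * (\<Sum>w\<in>UNIV. mmul Gk R x w * f x w)" by (simp only: A)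
    also have "\<dots> = (\<Sum>w\<in>UNIV. \<pi> x * mmul Gk R x w * f x w)" by (simp add: sum_distrib_left mult.assoc)
    finally show "(\<Sum>y\<in>UNIV. \<pi> x * mmul (mmul Gk R) Gk x y * f x y) = (\<Sum>w\<in>UNIV. \<pi> x * mmul Gk R x w * f x w)" .
  qed
  also have "\<dots> = (\<Sum>w\<in>UNIV. \<Sum>x\<in>UNIV. \<pi> x * mmul Gk R x w * f x w)" by (rule sum.swap)
  also have "\<dots> = (\<Sum>w\<in>UNIV. \<Sum>z\<in>UNIV. \<pi> z * R z w * f z w)" by (simp add: B)
  also have "\<dots> = (\<Sum>z\<in>UNIV. \<Sum>w\<in>UNIV. \<pi> z * R z w * f z w)" by (rule sum.swap)
  finally show ?thesis .
qed

end


context orbs begin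

lemma G_nn: "0 \<le> Gk x y"
  using G_okern unfolding okern_def stochastic_def by auto

lemma mmul_nn: "(\<And>a b. 0 \<le> A a b) \<Longrightarrow> (\<And>a b. 0 \<le> B a b) \<Longrightarrow> 0 \<le> mmul A B x y"
  unfolding mmul_def by (intro sum_nonneg mult_nonneg_nonneg) auto

lemma mmul_ge: "(\<And>a b. 0 \<le> A a b) \<Longrightarrow> (\<And>a b. 0 \<le> B a b) \<Longrightarrow> A x z * B z y \<le> mmul A B x y"
  unfolding mmul_def by (rule member_le_sum) (auto intro: mult_nonneg_nonneg)

lemma Gxx: "Gk x x > 0"
  using orefl[of x] pos[of x] spos[of x] by (simp add: gibbs_kernel_def)

lemma Hpos:
  assumes Rn: "\<And>a b. 0 \<le> R a b" and r: "R x y > 0"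
  shows "mmul (mmul Gk R) Gk x y > 0"
proof -
  have "0 < Gk x x * R x y" using Gxx r by simp
  also have "\<dots> \<le> mmul Gk R x y" using mmul_ge[of Gk R] G_nn Rn by blast
  finally have a: "0 < mmul Gk R x y" .
  then have "0 < mmul Gk R x y * Gk y y" using Gxx by simp
  also have "\<dots> \<le> mmul (mmul Gk R) Gk x y" using mmul_ge[of "mmul Gk R" Gk] G_nn Rn mmul_nn by blast
  finally show ?thesis .
qed

lemma pyth:
  assumes Rn: "\<And>a b. 0 \<le> R a b" and Qn: "\<And>a b. 0 \<le> Q a b" and QG: "mmul (mmul Gk Q) Gk = Q"
  defines "H \<equiv> mmul (mmul Gk R) Gk"
  shows "KL \<pi> R Q = KL \<pi> R H + KL \<pi> H Q" and "KL \<pi> R H = ereal (klsum \<pi> R H)"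
proof -
  have Hn: "0 \<le> H a b" for a b unfolding H_def by (intro mmul_nn G_nn Rn)
  have Qinv: "Q x' y' * \<pi> y = Q x y * \<pi> y'" if "orb x = orb x'" "orb y = orb y'" for x x' y y'
    using scale[OF that, of Q] QG by simp
  have Hinv: "H x' y' * \<pi> y = H x y * \<pi> y'" if "orb x = orb x'" "orb y = orb y'" for x x' y y'
    using scale[OF that, of R] unfolding H_def by simp
  have fin1: "\<not> (\<exists>x y. \<pi> x * R x y > 0 \<and> H x y = 0)"
  proof
    assume "\<exists>x y. \<pi> x * R x y > 0 \<and> H x y = 0"
    then obtain x y where "\<pi> x * R x y > 0" "H x y = 0" by blast
    moreover have "R x y > 0" using calculation(1) pos[of x] Rn[of x y] by (simp add: zero_less_mult_iff)
    ultimately show False using Hpos[OF Rn] unfolding H_def by fastforce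
  qed
  then show kh: "KL \<pi> R H = ereal (klsum \<pi> R H)" by (simp add: KL_alt)
  define f where "f x y = (if Q x y = 0 then 1 else (0::real))" for x y
  have finv: "f x y = f x' y'" if "orb x = orb x'" "orb y = orb y'" for x x' y y'
  proof -
    have "Q x' y' * \<pi> y = Q x y * \<pi> y'" using Qinv that by blast
    then have "Q x' y' = 0 \<longleftrightarrow> Q x y = 0" using pos[of y] pos[of y'] by auto
    then show ?thesis unfolding f_def by simp
  qed
  have crit: "(\<exists>x y. \<pi> x * A x y > 0 \<and> Q x y = 0) \<longleftrightarrow> (\<Sum>x\<in>UNIV. \<Sum>y\<in>UNIV. \<pi> x * A x y * f x y) \<noteq> 0"
    if An: "\<And>a b. 0 \<le> A a b" for A
  proof -
    have tn: "0 \<le> \<pi> x * A x y * f x y" for x y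
      using pos[of x] An[of x y] by (simp add: f_def less_imp_le)
    have "(\<Sum>x\<in>UNIV. \<Sum>y\<in>UNIV. \<pi> x * A x y * f x y) = 0 \<longleftrightarrow> (\<forall>x y. \<pi> x * A x y * f x y = 0)"
      using tn by (simp add: sum_nonneg_eq_0_iff sum_nonneg)
    moreover have "\<pi> x * A x y * f x y = 0 \<longleftrightarrow> \<not> (\<pi> x * A x y > 0 \<and> Q x y = 0)" for x y
      using pos[of x] An[of x y] by (auto simp: f_def zero_less_mult_iff)
    ultimately show ?thesis by auto
  qed
  have e: "(\<Sum>x\<in>UNIV. \<Sum>y\<in>UNIV. \<pi> x * H x y * f x y) = (\<Sum>x\<in>UNIV. \<Sum>y\<in>UNIV. \<pi> x * R x y * f x y)"
    unfolding H_def by (rule inv_sum, rule finv)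
  have equiv: "(\<exists>x y. \<pi> x * R x y > 0 \<and> Q x y = 0) \<longleftrightarrow> (\<exists>x y. \<pi> x * H x y > 0 \<and> Q x y = 0)"
    using crit[OF Rn] crit[OF Hn] e by simp
  show "KL \<pi> R Q = KL \<pi> R H + KL \<pi> H Q"
  proof (cases "\<exists>x y. \<pi> x * R x y > 0 \<and> Q x y = 0")
    case True
    then show ?thesis using equiv kh by (simp add: KL_alt)
  next
    case False
    note nQ = False
    then have F2: "\<not> (\<exists>x y. \<pi> x * H x y > 0 \<and> Q x y = 0)" using equiv by blast
    define g where "g x y = ln (H x y / Q x y)" for x y
    have ginv: "g x y = g x' y'" if "orb x = orb x'" "orb y = orb y'" for x x' y y'
    proof -
      have "H x' y' = H x y * (\<pi> y' / \<pi> y)" "Q x' y' = Q x y * (\<pi> y' / \<pi> y)"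
        using Hinv[OF that] Qinv[OF that] pos[of y] by (simp_all add: field_simps)
      moreover have "\<pi> y' / \<pi> y \<noteq> 0" using pos[of y] pos[of y'] by simp
      ultimately show ?thesis unfolding g_def by simp
    qed
    have pw: "\<pi> x * R x y * ln (R x y / Q x y) = \<pi> x * R x y * ln (R x y / H x y) + \<pi> x * R x y * g x y" for x y
    proof (cases "R x y = 0")
      case False
      then have r: "R x y > 0" using Rn[of x y] by simp
      then have pr: "\<pi> x * R x y > 0" using pos[of x] by simp
      have "Q x y \<noteq> 0" using nQ pr by blast
      then have q: "Q x y > 0" using Qn[of x y] by simp
      have "H x y \<noteq> 0" using pr fin1 by blast
      then have h: "H x y > 0" using Hn[of x y] by simp
      have "ln (R x y / Q x y) = ln (R x y / H x y) + g x y"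
        unfolding g_def using r q h by (simp add: ln_div)
      then show ?thesis by (simp add: distrib_left)
    qed simp
    have "klsum \<pi> R Q = klsum \<pi> R H + (\<Sum>x\<in>UNIV. \<Sum>y\<in>UNIV. \<pi> x * R x y * g x y)"
      unfolding klsum_def pw by (simp add: sum.distrib)
    also have "(\<Sum>x\<in>UNIV. \<Sum>y\<in>UNIV. \<pi> x * R x y * g x y) = (\<Sum>x\<in>UNIV. \<Sum>y\<in>UNIV. \<pi> x * H x y * g x y)"
      unfolding H_def by (rule inv_sum[symmetric], rule ginv)
    also have "\<dots> = klsum \<pi> H Q" unfolding klsum_def g_def by simp
    finally show ?thesis using False F2 kh by (simp add: KL_alt)
  qed
qed

end


lemma min_scale: "(a::real) > 0 \<Longrightarrow> a * min 1 (b / a) = min a b"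
  by (simp add: min_mult_distrib_left)

context orbs begin

definition mk :: "('x \<Rightarrow> 'x \<Rightarrow> real) \<Rightarrow> 'x \<Rightarrow> 'x \<Rightarrow> real" where
  "mk w x y = (if y = x then 1 - (\<Sum>z\<in>orb x - {x}. w x z) else if y \<in> orb x then w x y else 0)"

lemma cge: "real (card (orb x)) \<ge> 1"
proof -
  have "orb x \<noteq> {}" using orefl[of x] by blast
  then have "card (orb x) > 0" by (simp add: card_gt_0_iff)
  then show ?thesis by simp
qed

lemma mk_okern:
  assumes wn: "\<And>x z. 0 \<le> w x z" and wle: "\<And>x z. w x z \<le> 1 / (real (card (orb x)) - 1)"
    and wr: "\<And>x y. y \<in> orb x \<Longrightarrow> \<pi> x * w x y = \<pi> y * w y x"
  shows "okern (mk w)"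
proof -
  have diag: "(\<Sum>z\<in>orb x - {x}. w x z) \<le> 1" for x
  proof -
    have "(\<Sum>z\<in>orb x - {x}. w x z) \<le> (\<Sum>z\<in>orb x - {x}. 1 / (real (card (orb x)) - 1))"
      by (rule sum_mono) (rule wle)
    also have "\<dots> = (real (card (orb x)) - 1) * (1 / (real (card (orb x)) - 1))"
      using orefl[of x] cge[of x] by (simp add: card_Diff_singleton of_nat_diff)
    also have "\<dots> \<le> 1" by (cases "real (card (orb x)) - 1 = 0") simp_all
    finally show ?thesis .
  qed
  have nn: "0 \<le> mk w x y" for x y using diag[of x] wn unfolding mk_def by auto
  have rs: "(\<Sum>y\<in>UNIV. mk w x y) = 1" for x
  proof -
    have "(\<Sum>y\<in>UNIV. mk w x y) = mk w x x + (\<Sum>y\<in>UNIV - {x}. mk w x y)"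
      by (rule sum.remove) auto
    also have "(\<Sum>y\<in>UNIV - {x}. mk w x y) = (\<Sum>y\<in>UNIV - {x}. if y \<in> orb x - {x} then w x y else 0)"
      by (intro sum.cong refl) (auto simp: mk_def)
    also have "\<dots> = (\<Sum>y\<in>(UNIV - {x}) \<inter> (orb x - {x}). w x y)"
      by (rule sum.inter_restrict[symmetric]) simp
    also have "(UNIV - {x}) \<inter> (orb x - {x}) = orb x - {x}" by auto
    finally show ?thesis by (simp add: mk_def)
  qed
  have sp: "mk w x y \<noteq> 0 \<Longrightarrow> y \<in> orb x" for x y
    using orefl[of x] unfolding mk_def by (auto split: if_splits)
  have rev: "\<pi> x * mk w x y = \<pi> y * mk w y x" for x y
  proof (cases "x = y")
    case False
    show ?thesis
    proof (cases "y \<in> orb x")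
      case True
      then have "x \<in> orb y" using osym orefl by metis
      then show ?thesis using True False wr[OF True] by (simp add: mk_def)
    next
      case F2: False
      then have "x \<notin> orb y" using osym orefl by metis
      then show ?thesis using F2 False by (simp add: mk_def)
    qed
  qed simp
  show ?thesis unfolding okern_def stochastic_def using nn rs sp rev by blast
qed

lemma M_okern: "okern (mh_kernel \<pi> orb)"
proof -
  let ?w = "\<lambda>x z. (1 / (real (card (orb x)) - 1)) * min 1 (\<pi> z / \<pi> x)"
  have e: "mh_kernel \<pi> orb = mk ?w" by (intro ext) (simp add: mh_kernel_def mk_def)
  have k: "0 \<le> 1 / (real (card (orb x)) - 1)" for x using cge[of x] by simp
  have "okern (mk ?w)"
  proof (rule mk_okern)
    fix x z
    show "0 \<le> ?w x z" using k[of x] pos[of x] pos[of z] by (simp add: less_imp_le)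
    have "min 1 (\<pi> z / \<pi> x) \<le> 1" by simp
    from mult_left_mono[OF this k[of x]]
    show "?w x z \<le> 1 / (real (card (orb x)) - 1)" by simp
  next
    fix x y assume "y \<in> orb x"
    then have "orb y = orb x" using osym by blast
    moreover have "\<pi> x * min 1 (\<pi> y / \<pi> x) = \<pi> y * min 1 (\<pi> x / \<pi> y)"
      using pos[of x] pos[of y] by (simp add: min_scale min.commute)
    ultimately show "\<pi> x * ?w x y = \<pi> y * ?w y x" by (metis mult.left_commute)
  qed
  then show ?thesis using e by simp
qed

lemma B_okern: "okern (barker_kernel \<pi> orb)"
proof -
  let ?w = "\<lambda>x z. (1 / (real (card (orb x)) - 1)) * (\<pi> z / (\<pi> x + \<pi> z))"
  have e: "barker_kernel \<pi> orb = mk ?w" by (intro ext) (simp add: barker_kernel_def mk_def)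
  have k: "0 \<le> 1 / (real (card (orb x)) - 1)" for x using cge[of x] by simp
  have "okern (mk ?w)"
  proof (rule mk_okern)
    fix x z
    show "0 \<le> ?w x z" using k[of x] pos[of x] pos[of z] by (simp add: less_imp_le)
    have "\<pi> z / (\<pi> x + \<pi> z) \<le> 1" using pos[of x] pos[of z] by simp
    from mult_left_mono[OF this k[of x]]
    show "?w x z \<le> 1 / (real (card (orb x)) - 1)" by simp
  next
    fix x y assume "y \<in> orb x"
    then have "orb y = orb x" using osym by blast
    moreover have "\<pi> x * (\<pi> y / (\<pi> x + \<pi> y)) = \<pi> y * (\<pi> x / (\<pi> y + \<pi> x))"
      by (simp add: field_simps add.commute)
    ultimately show "\<pi> x * ?w x y = \<pi> y * ?w y x" by (metis mult.left_commute)
  qed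
  then show ?thesis using e by simp
qed

lemma Pi_fixed: "Pi_mat \<pi> \<in> fixed_set \<pi> Gk"
proof -
  have st: "stochastic (Pi_mat \<pi>)" unfolding stochastic_def Pi_mat_def using pos pmf by (auto simp: less_imp_le)
  have "(\<Sum>x\<in>UNIV. \<pi> x * Pi_mat \<pi> x y) = \<pi> y" for y
    unfolding Pi_mat_def using pmf by (simp add: sum_distrib_right[symmetric])
  then have ss: "Pi_mat \<pi> \<in> stat_set \<pi>" using st unfolding stat_set_def by auto
  have GS: "(\<Sum>x\<in>UNIV. \<pi> x * Gk x y) = \<pi> y" for y
    using okern_stat[OF G_okern] unfolding stat_set_def by auto
  have a: "mmul Gk (Pi_mat \<pi>) = Pi_mat \<pi>"
    using G_okern unfolding okern_def stochastic_def
    by (intro ext) (simp add: mmul_def Pi_mat_def sum_distrib_right[symmetric])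
  have b: "mmul (Pi_mat \<pi>) Gk = Pi_mat \<pi>"
    by (intro ext) (simp add: mmul_def Pi_mat_def GS)
  show ?thesis unfolding fixed_set_def using ss a b by simp
qed

lemma proj:
  assumes R: "stochastic R" and HG: "mmul (mmul Gk R) Gk = H" and Hin: "H \<in> fixed_set \<pi> Gk"
  shows "(\<forall>Q\<in>fixed_set \<pi> Gk. KL \<pi> R Q = KL \<pi> R H + KL \<pi> H Q)
    \<and> KL \<pi> R H = (INF Q\<in>fixed_set \<pi> Gk. KL \<pi> R Q)
    \<and> (\<forall>Q\<in>fixed_set \<pi> Gk. KL \<pi> R Q = KL \<pi> R H \<longrightarrow> Q = H)
    \<and> KL \<pi> R (Pi_mat \<pi>) \<ge> KL \<pi> H (Pi_mat \<pi>)"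
proof -
  have Rn: "\<And>a b. 0 \<le> R a b" using R unfolding stochastic_def by auto
  have Hs: "stochastic H" using Hin unfolding fixed_set_def stat_set_def by auto
  have posa: "\<forall>x. \<pi> x > 0" using pos by auto
  have py: "KL \<pi> R Q = KL \<pi> R H + KL \<pi> H Q" and kh: "KL \<pi> R H = ereal (klsum \<pi> R H)"
    and hq: "KL \<pi> H Q \<ge> 0 \<and> (KL \<pi> H Q = 0 \<longrightarrow> H = Q)"
    if Q: "Q \<in> fixed_set \<pi> Gk" for Q
  proof -
    have Qs: "stochastic Q" and QG: "mmul (mmul Gk Q) Gk = Q"
      using Q unfolding fixed_set_def stat_set_def by auto
    have Qn: "\<And>a b. 0 \<le> Q a b" using Qs unfolding stochastic_def by auto
    show "KL \<pi> R Q = KL \<pi> R H + KL \<pi> H Q" "KL \<pi> R H = ereal (klsum \<pi> R H)"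
      using pyth[OF Rn Qn QG] HG by auto
    show "KL \<pi> H Q \<ge> 0 \<and> (KL \<pi> H Q = 0 \<longrightarrow> H = Q)" by (rule gibbs[OF Hs Qs posa])
  qed
  have kh': "KL \<pi> R H = ereal (klsum \<pi> R H)" using kh[OF Hin] .
  have a: "\<forall>Q\<in>fixed_set \<pi> Gk. KL \<pi> R Q = KL \<pi> R H + KL \<pi> H Q" using py by blast
  have b: "KL \<pi> R H = (INF Q\<in>fixed_set \<pi> Gk. KL \<pi> R Q)"
  proof (rule antisym)
    show "KL \<pi> R H \<le> (INF Q\<in>fixed_set \<pi> Gk. KL \<pi> R Q)"
    proof (rule INF_greatest)
      fix Q assume Q: "Q \<in> fixed_set \<pi> Gk"
      have "0 \<le> KL \<pi> H Q" using hq[OF Q] by blast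
      then show "KL \<pi> R H \<le> KL \<pi> R Q" unfolding py[OF Q] kh' by (cases "KL \<pi> H Q") auto
    qed
    show "(INF Q\<in>fixed_set \<pi> Gk. KL \<pi> R Q) \<le> KL \<pi> R H" by (rule INF_lower[OF Hin])
  qed
  have c: "\<forall>Q\<in>fixed_set \<pi> Gk. KL \<pi> R Q = KL \<pi> R H \<longrightarrow> Q = H"
  proof (intro ballI impI)
    fix Q assume Q: "Q \<in> fixed_set \<pi> Gk" and e: "KL \<pi> R Q = KL \<pi> R H"
    have "ereal (klsum \<pi> R H) + KL \<pi> H Q = ereal (klsum \<pi> R H)" using e py[OF Q] kh' by simp
    then have "KL \<pi> H Q = 0" by (cases "KL \<pi> H Q") auto
    then show "Q = H" using hq[OF Q] by simp
  qed
  have d: "KL \<pi> R (Pi_mat \<pi>) \<ge> KL \<pi> H (Pi_mat \<pi>)"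
  proof -
    have "0 \<le> KL \<pi> R H" using gibbs[OF R Hs posa] by blast
    then have "0 \<le> klsum \<pi> R H" using kh' by simp
    then show ?thesis unfolding py[OF Pi_fixed] kh' by (cases "KL \<pi> H (Pi_mat \<pi>)") auto
  qed
  show ?thesis using a b c d by blast
qed

lemma absorb: assumes "okern K" shows "mmul Gk (mmul K X) = mmul Gk X"
  by (simp add: mmul_assoc[symmetric] GK[OF assms])

end

theorem proposition5p3:
  fixes \<pi> :: "'x::finite \<Rightarrow> real"
    and Grp :: "('g, 'm) monoid_scheme" and \<phi> :: "'g \<Rightarrow> 'x \<Rightarrow> 'x"
  assumes pos: "\<forall>x. \<pi> x > 0"
    and pmf: "(\<Sum>x\<in>UNIV. \<pi> x) = 1"
    and act: "group_action Grp UNIV \<phi>"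
  defines "orb \<equiv> (\<lambda>x. orbit Grp \<phi> x)"
  defines "G \<equiv> gibbs_kernel \<pi> orb"
    and "M \<equiv> mh_kernel \<pi> orb"
    and "B \<equiv> barker_kernel \<pi> orb"
  defines "GG \<equiv> fixed_set \<pi> G"
  shows "\<forall>P\<in>stat_set \<pi>.
     (\<forall>Q\<in>GG. KL \<pi> P Q = KL \<pi> P (mmul (mmul G P) G) + KL \<pi> (mmul (mmul G P) G) Q)
   \<and> mmul (mmul G P) G \<in> GG
   \<and> KL \<pi> P (mmul (mmul G P) G) = (INF Q\<in>GG. KL \<pi> P Q)
   \<and> (\<forall>Q\<in>GG. KL \<pi> P Q = KL \<pi> P (mmul (mmul G P) G) \<longrightarrow> Q = mmul (mmul G P) G)
   \<and> (\<forall>Q\<in>GG. KL \<pi> (mmul (mmul M P) M) Q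
               = KL \<pi> (mmul (mmul M P) M) (mmul (mmul G P) G) + KL \<pi> (mmul (mmul G P) G) Q)
   \<and> (\<forall>Q\<in>GG. KL \<pi> (mmul (mmul B P) B) Q
               = KL \<pi> (mmul (mmul B P) B) (mmul (mmul G P) G) + KL \<pi> (mmul (mmul G P) G) Q)
   \<and> KL \<pi> (mmul (mmul M P) M) (mmul (mmul G P) G) = (INF Q\<in>GG. KL \<pi> (mmul (mmul M P) M) Q)
   \<and> (\<forall>Q\<in>GG. KL \<pi> (mmul (mmul M P) M) Q = KL \<pi> (mmul (mmul M P) M) (mmul (mmul G P) G)
               \<longrightarrow> Q = mmul (mmul G P) G)
   \<and> KL \<pi> (mmul (mmul B P) B) (mmul (mmul G P) G) = (INF Q\<in>GG. KL \<pi> (mmul (mmul B P) B) Q)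
   \<and> (\<forall>Q\<in>GG. KL \<pi> (mmul (mmul B P) B) Q = KL \<pi> (mmul (mmul B P) B) (mmul (mmul G P) G)
               \<longrightarrow> Q = mmul (mmul G P) G)
   \<and> KL \<pi> P (Pi_mat \<pi>) \<ge> KL \<pi> (mmul (mmul G P) G) (Pi_mat \<pi>)
   \<and> KL \<pi> (mmul (mmul M P) M) (Pi_mat \<pi>) \<ge> KL \<pi> (mmul (mmul G P) G) (Pi_mat \<pi>)
   \<and> KL \<pi> (mmul (mmul B P) B) (Pi_mat \<pi>) \<ge> KL \<pi> (mmul (mmul G P) G) (Pi_mat \<pi>)"
proof -
  interpret O: orbs \<pi> orb
  proof
    show "\<And>x. 0 < \<pi> x" using pos by blast
    show "(\<Sum>x\<in>UNIV. \<pi> x) = 1" by (rule pmf)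
    show "\<And>x. x \<in> orb x" unfolding orb_def by (rule orbit_facts(1)[OF act])
    show "\<And>x y. y \<in> orb x \<longleftrightarrow> orb y = orb x" unfolding orb_def by (rule orbit_facts(2)[OF act])
  qed
  have Gk: "O.okern G" unfolding G_def by (rule O.G_okern)
  have Mk: "O.okern M" unfolding M_def by (rule O.M_okern)
  have Bk: "O.okern B" unfolding B_def by (rule O.B_okern)
  have GGd: "GG = fixed_set \<pi> (gibbs_kernel \<pi> orb)" unfolding GG_def G_def ..
  have Gd: "G = gibbs_kernel \<pi> orb" unfolding G_def ..
  show ?thesis
    apply (intro ballI)
    subgoal premises P for P
    proof -
    define H where "H = mmul (mmul G P) G"
    have Ps: "stochastic P" using P unfolding stat_set_def by auto
    have GS: "G \<in> stat_set \<pi>" using O.okern_stat[OF Gk] .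
    have GG': "mmul G G = G" using O.KG[OF Gk] unfolding Gd .
    have GGX: "mmul G (mmul G X) = mmul G X" for X using O.absorb[OF Gk] unfolding Gd .
    have GMX: "mmul G (mmul M X) = mmul G X" for X using O.absorb[OF Mk] unfolding Gd .
    have GBX: "mmul G (mmul B X) = mmul G X" for X using O.absorb[OF Bk] unfolding Gd .
    have MG: "mmul M G = G" using O.KG[OF Mk] unfolding Gd .
    have BG: "mmul B G = G" using O.KG[OF Bk] unfolding Gd .
    have Hin: "H \<in> GG"
    proof -
      have "H \<in> stat_set \<pi>" unfolding H_def by (intro stat_mmul GS P)
      moreover have "mmul (mmul G H) G = H" unfolding H_def by (simp add: mmul_assoc GG' GGX)
      ultimately show ?thesis unfolding GG_def fixed_set_def by simp
    qed
    have Hin': "H \<in> fixed_set \<pi> (gibbs_kernel \<pi> orb)" using Hin GGd by simp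
    have pr: "(\<forall>Q\<in>GG. KL \<pi> R Q = KL \<pi> R H + KL \<pi> H Q)
      \<and> KL \<pi> R H = (INF Q\<in>GG. KL \<pi> R Q)
      \<and> (\<forall>Q\<in>GG. KL \<pi> R Q = KL \<pi> R H \<longrightarrow> Q = H)
      \<and> KL \<pi> R (Pi_mat \<pi>) \<ge> KL \<pi> H (Pi_mat \<pi>)"
      if "stochastic R" "mmul (mmul G R) G = H" for R
      using O.proj[of R H] Hin' that unfolding Gd[symmetric] GG_def by blast
    have Ms: "stochastic M" and Bs: "stochastic B" using Mk Bk unfolding O.okern_def by auto
    have e2: "mmul (mmul G (mmul (mmul M P) M)) G = H" unfolding H_def by (simp add: mmul_assoc GMX MG)
    have e3: "mmul (mmul G (mmul (mmul B P) B)) G = H" unfolding H_def by (simp add: mmul_assoc GBX BG)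
    note p1 = pr[OF Ps H_def[symmetric]]
    note p2 = pr[OF stoch_mmul[OF stoch_mmul[OF Ms Ps] Ms] e2]
    note p3 = pr[OF stoch_mmul[OF stoch_mmul[OF Bs Ps] Bs] e3]
    show ?thesis unfolding H_def[symmetric] using p1 p2 p3 Hin by blast
  qed
  done
qed


end
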